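(* Let $k\ge 2$ and let $U$ be an intersecting family of polynomials over $\mathbb{F}_q$ of degree at most $k$. Let $c,\alpha,\beta\in\mathbb{F}_q$ and suppose $U$ contains more than $(q-1)q^{k-2}$ polynomials $h_i$ whose coefficient of $x^k$ equals $c$ and which satisfy $h_i(\alpha)=\beta$. Then every polynomial $f\in U$ whose coefficient of $x^k$ is not $c$ satisfies $f(\alpha)=\beta$.
   Context: A set of polynomials over $\mathbb{F}_q$ is intersecting if for any two members $f_1,f_2$ the graphs $\{(x,f_i(x)):x\in\mathbb{F}_q\}$ share at least one point. *)

theory Defs
  imports "HOL-Computational_Algebra.Polynomial"
begin

definition intersecting_family :: "('a::{finite,field}) poly set \<Rightarrow> bool" where
  "intersecting_family U \<longleftrightarrow> (\<forall>f1\<in>U. \<forall>f2\<in>U. \<exists>x. poly f1 x = poly f2 x)"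

end

theory Submission
  imports Defs
begin

lemma lin_zero:
  fixes d :: "'a::field poly"
  assumes "\<And>i. i \<ge> 2 \<Longrightarrow> coeff d i = 0"
    and "poly d a = 0" and "poly d b = 0" and "a \<noteq> b"
  shows "d = 0"
proof -
  have deq: "d = [:coeff d 0, coeff d 1:]"
  proof (rule poly_eqI)
    fix n show "coeff d n = coeff [:coeff d 0, coeff d 1:] n"
      using assms(1)[of n] by (cases n; cases "n - 1"; auto simp: coeff_pCons split: nat.splits)
  qed
  have e1: "coeff d 0 + a * coeff d 1 = 0" using assms(2) deq by (metis poly_pCons mult_zero_right poly_0 add_0_right mult.commute)
  have e2: "coeff d 0 + b * coeff d 1 = 0" using assms(3) deq by (metis poly_pCons mult_zero_right poly_0 add_0_right mult.commute)
  have "(a - b) * coeff d 1 = (coeff d 0 + a * coeff d 1) - (coeff d 0 + b * coeff d 1)"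
    by (simp add: algebra_simps)
  also have "\<dots> = 0" by (simp only: e1 e2 diff_self)
  finally have "(a - b) * coeff d 1 = 0" .
  hence c1: "coeff d 1 = 0" using assms(4) by simp
  hence "coeff d 0 = 0" using e1 by simp
  with c1 deq show ?thesis by simp
qed

theorem lemma8:
  fixes U :: "('a::{finite,field}) poly set" and k :: nat and c \<alpha> \<beta> :: 'a
  assumes "k \<ge> 2"
    and "intersecting_family U"
    and "\<forall>f\<in>U. degree f \<le> k"
    and "card {h\<in>U. coeff h k = c \<and> poly h \<alpha> = \<beta>} > (card (UNIV::'a set) - 1) * card (UNIV::'a set) ^ (k - 2)"
  shows "\<forall>f\<in>U. coeff f k \<noteq> c \<longrightarrow> poly f \<alpha> = \<beta>"
proof (intro ballI impI, rule ccontr)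
  fix f assume fU: "f \<in> U" and fc: "coeff f k \<noteq> c" and fa: "poly f \<alpha> \<noteq> \<beta>"
  define H where "H = {h\<in>U. coeff h k = c \<and> poly h \<alpha> = \<beta>}"
  define X where "X = (\<lambda>h. SOME x. poly f x = poly h x)"
  have X: "poly f (X h) = poly h (X h)" if "h \<in> U" for h
    unfolding X_def by (rule someI_ex) (use assms(2) fU that in \<open>auto simp: intersecting_family_def\<close>)
  define F where "F = (\<lambda>h. (X h, map (coeff h) [2..<k]))"
  define T where "T = (UNIV - {\<alpha>}) \<times> {xs. set xs \<subseteq> (UNIV::'a set) \<and> length xs = k - 2}"
  have inj: "inj_on F H"
  proof (rule inj_onI)
    fix h1 h2 assume h1: "h1 \<in> H" and h2: "h2 \<in> H" and eq: "F h1 = F h2"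
    have Xe: "X h1 = X h2" and me: "map (coeff h1) [2..<k] = map (coeff h2) [2..<k]"
      using eq by (auto simp: F_def)
    have xa: "X h1 \<noteq> \<alpha>" using X[of h1] h1 fa by (auto simp: H_def)
    have "h1 - h2 = 0"
    proof (rule lin_zero[where a = \<alpha> and b = "X h1"])
      fix i :: nat assume i: "i \<ge> 2"
      show "coeff (h1 - h2) i = 0"
      proof (cases "i < k")
        case True
        then have "i \<in> set [2..<k]" using i by simp
        then show ?thesis using me by (simp add: map_eq_conv)
      next
        case False
        show ?thesis
        proof (cases "i = k")
          case True then show ?thesis using h1 h2 by (simp add: H_def)
        next
          case False
          with \<open>\<not> i < k\<close> have "i > k" by simp
          then have "i > degree h1" "i > degree h2" using h1 h2 assms(3) by (auto simp: H_def)
          then show ?thesis by (simp add: coeff_eq_0)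
        qed
      qed
    next
      show "poly (h1 - h2) \<alpha> = 0" using h1 h2 by (simp add: H_def)
    next
      show "poly (h1 - h2) (X h1) = 0" using X[of h1] X[of h2] h1 h2 Xe by (simp add: H_def)
    next
      show "\<alpha> \<noteq> X h1" using xa by simp
    qed
    then show "h1 = h2" by simp
  qed
  have FT: "F ` H \<subseteq> T"
  proof
    fix y assume "y \<in> F ` H"
    then obtain h where h: "h \<in> H" "y = F h" by auto
    have "X h \<noteq> \<alpha>" using X[of h] h fa by (auto simp: H_def)
    then show "y \<in> T" using h by (auto simp: F_def T_def)
  qed
  have "card H \<le> card T"
    by (rule card_inj_on_le[OF inj FT]) (use finite_lists_length_eq[of "UNIV::'a set" "k - 2"] in \<open>simp add: T_def\<close>)
  also have "card T = (card (UNIV::'a set) - 1) * card (UNIV::'a set) ^ (k - 2)"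
    using card_lists_length_eq[of "UNIV::'a set" "k - 2"]
    by (simp add: T_def card_cartesian_product card_Diff_singleton)
  finally show False using assms(4) by (simp add: H_def)
qed

end
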